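(* Let $G$ be a connected graph of order $n$ with chromatic number $\chi(G)=2$. If $n$ is even, then $ABC(G)\leq \frac{n}{2}\sqrt{n-2}$, with equality if and only if $G\cong T_{n,2}$. If $n$ is odd, then $ABC(G)\leq \frac{1}{2}\sqrt{(n-2)(n^2-1)}$, with equality if and only if $G\cong T_{n,2}$.
   Context: For a simple graph $G$, $ABC(G)=\sum_{uv\in E(G)}\sqrt{\frac{d(u)+d(v)-2}{d(u)d(v)}}$, where $d(u)$ is the degree of $u$. The chromatic number is the least number of colors in a proper vertex coloring. $T_{n,t}$ denotes the complete $t$-partite graph on $n$ vertices whose part sizes $n_1,\dots,n_t$ satisfy $|n_i-n_j|\leq 1$ for all $i,j$; so $T_{n,2}=K_{\lfloor n/2\rfloor,\lceil n/2\rceil}$. *)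

theory Defs
  imports Complex_Main
begin

definition simple_graph :: "'a set \<Rightarrow> ('a \<Rightarrow> 'a \<Rightarrow> bool) \<Rightarrow> bool" where
  "simple_graph V E \<longleftrightarrow> finite V \<and> (\<forall>u v. E u v \<longrightarrow> u \<in> V \<and> v \<in> V)
     \<and> (\<forall>u v. E u v \<longrightarrow> E v u) \<and> (\<forall>v. \<not> E v v)"

definition graph_connected :: "'a set \<Rightarrow> ('a \<Rightarrow> 'a \<Rightarrow> bool) \<Rightarrow> bool" where
  "graph_connected V E \<longleftrightarrow> V \<noteq> {} \<and> (\<forall>u\<in>V. \<forall>v\<in>V. E\<^sup>*\<^sup>* u v)"

definition degree :: "'a set \<Rightarrow> ('a \<Rightarrow> 'a \<Rightarrow> bool) \<Rightarrow> 'a \<Rightarrow> nat" where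
  "degree V E v = card {u \<in> V. E v u}"

definition edges :: "'a set \<Rightarrow> ('a \<Rightarrow> 'a \<Rightarrow> bool) \<Rightarrow> 'a set set" where
  "edges V E = {{u, v} | u v. u \<in> V \<and> v \<in> V \<and> E u v}"

definition ABC :: "'a set \<Rightarrow> ('a \<Rightarrow> 'a \<Rightarrow> bool) \<Rightarrow> real" where
  "ABC V E = (\<Sum>e\<in>edges V E.
     sqrt ((real (\<Sum>v\<in>e. degree V E v) - 2) / real (\<Prod>v\<in>e. degree V E v)))"

definition colorable :: "'a set \<Rightarrow> ('a \<Rightarrow> 'a \<Rightarrow> bool) \<Rightarrow> nat \<Rightarrow> bool" where
  "colorable V E k \<longleftrightarrow> (\<exists>c :: 'a \<Rightarrow> nat. (\<forall>v\<in>V. c v < k)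
      \<and> (\<forall>u\<in>V. \<forall>v\<in>V. E u v \<longrightarrow> c u \<noteq> c v))"

definition chromatic_number :: "'a set \<Rightarrow> ('a \<Rightarrow> 'a \<Rightarrow> bool) \<Rightarrow> nat" where
  "chromatic_number V E = (LEAST k. colorable V E k)"

text \<open>Turan graph T_{n,t}: vertices 0..n-1, parts given by residues mod t
  (part sizes differ by at most one), complete multipartite.\<close>
definition turan_V :: "nat \<Rightarrow> nat set" where
  "turan_V n = {..<n}"

definition turan_E :: "nat \<Rightarrow> nat \<Rightarrow> nat \<Rightarrow> nat \<Rightarrow> bool" where
  "turan_E n t i j \<longleftrightarrow> i < n \<and> j < n \<and> i mod t \<noteq> j mod t"

definition graph_iso :: "'a set \<Rightarrow> ('a \<Rightarrow> 'a \<Rightarrow> bool) \<Rightarrow> 'b set \<Rightarrow> ('b \<Rightarrow> 'b \<Rightarrow> bool) \<Rightarrow> bool" where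
  "graph_iso V E W F \<longleftrightarrow> (\<exists>f. bij_betw f V W \<and> (\<forall>u\<in>V. \<forall>v\<in>V. E u v \<longleftrightarrow> F (f u) (f v)))"

end

theory Submission
  imports Defs "HOL-Analysis.Convex"
begin


lemma key_real:
  fixes m p n :: real
  assumes "p > 0" "0 \<le> m" "m \<le> p" "n \<ge> 4"
  shows "m * (n - 2 * m / p) \<le> p * (n - 2)" and "m < p \<Longrightarrow> m * (n - 2 * m / p) < p * (n - 2)"
proof -
  have eq: "p * (n - 2) - m * (n - 2 * m / p) = (p - m) * (p * n - 2 * p - 2 * m) / p"
    using assms(1) by (simp add: field_simps)
  have f: "p * n - 2 * p - 2 * m \<ge> 2 * p - 2 * m"
  proof -
    have "p * n \<ge> p * 4" using assms by (intro mult_left_mono) auto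
    then show ?thesis by linarith
  qed
  have "(p - m) * (p * n - 2 * p - 2 * m) / p \<ge> 0"
    using f assms by (intro divide_nonneg_pos mult_nonneg_nonneg) linarith+
  then show "m * (n - 2 * m / p) \<le> p * (n - 2)" using eq by linarith
  assume "m < p"
  then have "(p - m) * (p * n - 2 * p - 2 * m) / p > 0"
    using f assms \<open>m < p\<close> by (intro divide_pos_pos mult_pos_pos) linarith+
  then show "m * (n - 2 * m / p) < p * (n - 2)" using eq by linarith
qed

lemma card_parity:
  "card {i\<in>{..<n}. i mod 2 = 0} = (n + 1) div 2 \<and> card {i\<in>{..<n}. i mod 2 = 1} = n div 2"
proof (induction n)
  case 0
  then show ?case by simp
next
  case (Suc n)
  have e: "{i\<in>{..<Suc n}. i mod 2 = 0} = {i\<in>{..<n}. i mod 2 = 0} \<union> {i. i = n \<and> i mod 2 = 0}" by auto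
  have o: "{i\<in>{..<Suc n}. i mod 2 = 1} = {i\<in>{..<n}. i mod 2 = 1} \<union> {i. i = n \<and> i mod 2 = 1}" by auto
  have ce: "card {i\<in>{..<Suc n}. i mod 2 = 0} = card {i\<in>{..<n}. i mod 2 = 0} + card {i. i = n \<and> i mod 2 = 0}"
    unfolding e by (rule card_Un_disjoint) auto
  have co: "card {i\<in>{..<Suc n}. i mod 2 = 1} = card {i\<in>{..<n}. i mod 2 = 1} + card {i. i = n \<and> i mod 2 = 1}"
    unfolding o by (rule card_Un_disjoint) auto
  show ?case
  proof (cases "n mod 2 = 0")
    case True
    then have "{i. i = n \<and> i mod 2 = 0} = {n}" "{i. i = n \<and> i mod 2 = 1} = {}" by auto
    moreover have "(Suc n + 1) div 2 = (n+1) div 2 + 1" "Suc n div 2 = n div 2" using True by presburger+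
    ultimately show ?thesis using ce co Suc.IH by simp
  next
    case False
    then have "{i. i = n \<and> i mod 2 = 0} = {}" "{i. i = n \<and> i mod 2 = 1} = {n}" by auto
    moreover have "(Suc n + 1) div 2 = (n+1) div 2" "Suc n div 2 = n div 2 + 1" using False by presburger+
    ultimately show ?thesis using ce co Suc.IH by simp
  qed
qed

locale bip =
  fixes V :: "'a set" and E :: "'a \<Rightarrow> 'a \<Rightarrow> bool" and c :: "'a \<Rightarrow> nat"
  assumes sg: "simple_graph V E"
    and col: "\<forall>v\<in>V. c v < 2"
    and prp: "\<forall>u\<in>V. \<forall>v\<in>V. E u v \<longrightarrow> c u \<noteq> c v"
    and deg1: "\<forall>v\<in>V. degree V E v \<ge> 1"
    and ne: "V \<noteq> {}"
begin

definition "A = {v\<in>V. c v = 0}"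
definition "B = {v\<in>V. c v = 1}"
definition "P = {(u,v). u\<in>A \<and> v\<in>B \<and> E u v}"
abbreviation "d \<equiv> degree V E"

lemma finV: "finite V" and Ein: "E u v \<Longrightarrow> u \<in> V \<and> v \<in> V"
  and Esym: "E u v \<Longrightarrow> E v u" and Eirr: "\<not> E v v"
  using sg unfolding simple_graph_def by auto

lemma finA: "finite A" and finB: "finite B" using finV unfolding A_def B_def by auto

lemma VAB: "V = A \<union> B"
proof -
  have "\<And>v. v \<in> V \<Longrightarrow> c v = 0 \<or> c v = 1" using col by fastforce
  then show ?thesis unfolding A_def B_def by auto
qed
lemma disj: "A \<inter> B = {}" unfolding A_def B_def by auto

lemma cardV: "card V = card A + card B"
  using VAB disj finA finB card_Un_disjoint by metis

lemma PAB: "P \<subseteq> A \<times> B" unfolding P_def by auto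
lemma finP: "finite P" using PAB finA finB finite_subset by blast

lemma nbA: "u \<in> A \<Longrightarrow> {w\<in>V. E u w} \<subseteq> B"
proof
  fix w assume u: "u \<in> A" and w: "w \<in> {w\<in>V. E u w}"
  have "c u \<noteq> c w" "c w < 2" "c u = 0" using prp col u w unfolding A_def by auto
  then show "w \<in> B" using w unfolding B_def by auto
qed
lemma nbB: "u \<in> B \<Longrightarrow> {w\<in>V. E u w} \<subseteq> A"
proof
  fix w assume u: "u \<in> B" and w: "w \<in> {w\<in>V. E u w}"
  have "c u \<noteq> c w" "c w < 2" "c u = 1" using prp col u w unfolding B_def by auto
  then show "w \<in> A" using w unfolding A_def by auto
qed

lemma degA: "u \<in> A \<Longrightarrow> d u \<le> card B"
  unfolding degree_def using nbA finB card_mono by metis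
lemma degB: "u \<in> B \<Longrightarrow> d u \<le> card A"
  unfolding degree_def using nbB finA card_mono by metis

lemma dpos: "u \<in> A \<or> u \<in> B \<Longrightarrow> d u \<ge> 1" using deg1 VAB by auto

lemma ABne: "A \<noteq> {} \<and> B \<noteq> {}"
proof -
  obtain x where x: "x \<in> V" using ne by auto
  have "{w\<in>V. E x w} \<noteq> {}" proof
    assume "{w\<in>V. E x w} = {}"
    then have "d x = 0" unfolding degree_def by (metis card.empty)
    then show False using deg1 x by fastforce
  qed
  then obtain y where y: "y \<in> V" "E x y" by auto
  have "c x \<noteq> c y" using prp x y by auto
  show ?thesis
  proof (cases "c x = 0")
    case True
    then have "c y = 1" using col y \<open>c x \<noteq> c y\<close> by fastforce
    then show ?thesis using True x y unfolding A_def B_def by blast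
  next
    case False
    have "c x < 2" "c y < 2" using col x y by auto
    then have "c x = 1" "c y = 0" using False \<open>c x \<noteq> c y\<close> by linarith+
    then show ?thesis using x y unfolding A_def B_def by blast
  qed
qed

lemma cardAB: "card A \<ge> 1" "card B \<ge> 1"
  using ABne finA finB by (auto simp: Suc_le_eq card_gt_0_iff)

lemma edgesP: "edges V E = (\<lambda>(u,v). {u,v}) ` P"
proof
  show "(\<lambda>(u,v). {u,v}) ` P \<subseteq> edges V E"
    unfolding P_def edges_def A_def B_def by auto
next
  show "edges V E \<subseteq> (\<lambda>(u,v). {u,v}) ` P"
  proof
    fix e assume "e \<in> edges V E"
    then obtain u v where e: "e = {u,v}" "u \<in> V" "v \<in> V" "E u v" unfolding edges_def by auto
    show "e \<in> (\<lambda>(u,v). {u,v}) ` P"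
    proof (cases "u \<in> A")
      case True
      then have "v \<in> B" using nbA e by auto
      then have "(u,v) \<in> P" using True e unfolding P_def by auto
      then show ?thesis using e by force
    next
      case False
      then have u: "u \<in> B" using VAB e by auto
      then have "v \<in> A" using nbB e by auto
      then have "(v,u) \<in> P" using u e Esym unfolding P_def by auto
      then have "{v,u} \<in> (\<lambda>(u,v). {u,v}) ` P" by force
      then show ?thesis using e by (simp add: insert_commute)
    qed
  qed
qed

lemma injP: "inj_on (\<lambda>(u,v). {u,v}) P"
proof (rule inj_onI)
  fix p q assume p: "p \<in> P" and q: "q \<in> P" and eq: "(\<lambda>(u,v). {u,v}) p = (\<lambda>(u,v). {u,v}) q"
  obtain u v where pu: "p = (u,v)" by force
  obtain u' v' where qu: "q = (u',v')" by force
  have m: "u \<in> A" "v \<in> B" "u' \<in> A" "v' \<in> B" using p q pu qu unfolding P_def by auto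
  have "{u,v} = {u',v'}" using eq pu qu by simp
  then have "(u = u' \<and> v = v') \<or> (u = v' \<and> v = u')" by (simp add: doubleton_eq_iff)
  then show "p = q" using m disj pu qu by auto
qed

definition h :: "nat \<Rightarrow> nat \<Rightarrow> real" where
  "h x y = sqrt ((real x + real y - 2) / (real x * real y))"

lemma ABC_P: "ABC V E = (\<Sum>(u,v)\<in>P. h (d u) (d v))"
proof -
  have "ABC V E = (\<Sum>e\<in>(\<lambda>(u,v). {u,v}) ` P.
     sqrt ((real (\<Sum>v\<in>e. d v) - 2) / real (\<Prod>v\<in>e. d v)))"
    unfolding ABC_def edgesP by simp
  also have "\<dots> = (\<Sum>p\<in>P. sqrt ((real (\<Sum>v\<in>(\<lambda>(u,v). {u,v}) p. d v) - 2) / real (\<Prod>v\<in>(\<lambda>(u,v). {u,v}) p. d v)))"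
    by (rule sum.reindex[OF injP, unfolded comp_def])
  also have "\<dots> = (\<Sum>(u,v)\<in>P. h (d u) (d v))"
  proof (rule sum.cong)
    fix p assume p: "p \<in> P"
    obtain u v where pu: "p = (u,v)" by force
    have "u \<noteq> v" using p pu disj unfolding P_def by auto
    then show "sqrt ((real (\<Sum>v\<in>(\<lambda>(u,v). {u,v}) p. d v) - 2) / real (\<Prod>v\<in>(\<lambda>(u,v). {u,v}) p. d v)) = (case p of (u,v) \<Rightarrow> h (d u) (d v))"
      using pu by (simp add: h_def)
  qed simp
  finally show ?thesis .
qed

lemma PSig1: "P = Sigma A (\<lambda>u. {v\<in>V. E u v})"
  using nbA unfolding P_def by (auto simp: A_def B_def)

lemma PSig2: "P = (\<lambda>(v,u). (u,v)) ` Sigma B (\<lambda>v. {u\<in>V. E v u})"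
proof -
  have "P = (\<lambda>(v,u). (u,v)) ` {(v,u). v \<in> B \<and> u \<in> A \<and> E u v}" unfolding P_def by force
  also have "{(v,u). v \<in> B \<and> u \<in> A \<and> E u v} = Sigma B (\<lambda>v. {u\<in>V. E v u})"
    using nbB Esym Ein by (auto simp: A_def B_def)
  finally show ?thesis .
qed

lemma sum_fst: "(\<Sum>(u,v)\<in>P. 1 / real (d u)) = card A"
proof -
  have "(\<Sum>(u,v)\<in>P. 1 / real (d u)) = (\<Sum>u\<in>A. \<Sum>v\<in>{v\<in>V. E u v}. 1 / real (d u))"
    unfolding PSig1 by (rule sum.Sigma[symmetric]) (auto simp: finA finV)
  also have "\<dots> = (\<Sum>u\<in>A. 1)"
  proof (rule sum.cong)
    fix u assume "u \<in> A"
    then have "d u \<ge> 1" using dpos by auto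
    then show "(\<Sum>v\<in>{v\<in>V. E u v}. 1 / real (d u)) = 1" by (simp add: degree_def)
  qed simp
  finally show ?thesis by simp
qed

lemma sum_snd: "(\<Sum>(u,v)\<in>P. 1 / real (d v)) = card B"
proof -
  have inj: "inj_on (\<lambda>(v,u). (u,v)) (Sigma B (\<lambda>v. {u\<in>V. E v u}))" by (auto simp: inj_on_def)
  have "(\<Sum>(u,v)\<in>P. 1 / real (d v)) = (\<Sum>(v,u)\<in>Sigma B (\<lambda>v. {u\<in>V. E v u}). 1 / real (d v))"
    unfolding PSig2 by (subst sum.reindex[OF inj]) (auto simp: comp_def case_prod_beta intro!: sum.cong)
  also have "\<dots> = (\<Sum>v\<in>B. \<Sum>u\<in>{u\<in>V. E v u}. 1 / real (d v))"
    by (rule sum.Sigma[symmetric]) (auto simp: finB finV)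
  also have "\<dots> = (\<Sum>u\<in>B. 1)"
  proof (rule sum.cong)
    fix u assume "u \<in> B"
    then have "d u \<ge> 1" using dpos by auto
    then show "(\<Sum>v\<in>{v\<in>V. E u v}. 1 / real (d u)) = 1" by (simp add: degree_def)
  qed simp
  finally show ?thesis by simp
qed

lemma main_bound:
  "ABC V E \<le> sqrt (real (card P) * (real (card V) - 2 * real (card P) / (real (card A) * real (card B))))"
proof -
  define g where "g = (\<lambda>(u,v). (real (d u) + real (d v) - 2) / (real (d u) * real (d v)))"
  have g0: "g p \<ge> 0" if "p \<in> P" for p
  proof -
    obtain u v where p: "p = (u,v)" by force
    have "u \<in> A" "v \<in> B" using that p unfolding P_def by auto
    then have "d u \<ge> 1" "d v \<ge> 1" using dpos by auto
    then show ?thesis unfolding g_def p by simp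
  qed
  have hg: "(\<Sum>(u,v)\<in>P. h (d u) (d v)) = (\<Sum>p\<in>P. sqrt (g p))"
    unfolding g_def h_def by (simp add: case_prod_beta)
  have "(\<Sum>p\<in>P. sqrt (g p))\<^sup>2 \<le> (\<Sum>p\<in>P. (sqrt (g p))\<^sup>2) * card P"
    by (rule sum_squared_le_sum_of_squares)
  also have "(\<Sum>p\<in>P. (sqrt (g p))\<^sup>2) = (\<Sum>p\<in>P. g p)"
    using g0 by (intro sum.cong) auto
  also have "(\<Sum>p\<in>P. g p) = (\<Sum>(u,v)\<in>P. 1 / real (d u) + 1 / real (d v) - 2 / (real (d u) * real (d v)))"
  proof (rule sum.cong)
    fix p assume "p \<in> P"
    obtain u v where p: "p = (u,v)" by force
    have "u \<in> A" "v \<in> B" using \<open>p \<in> P\<close> p unfolding P_def by auto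
    then have "d u \<ge> 1" "d v \<ge> 1" using dpos by auto
    then show "g p = (case p of (u,v) \<Rightarrow> 1 / real (d u) + 1 / real (d v) - 2 / (real (d u) * real (d v)))"
      unfolding g_def p by (simp add: field_simps)
  qed simp
  also have "\<dots> = (\<Sum>(u,v)\<in>P. 1 / real (d u)) + (\<Sum>(u,v)\<in>P. 1 / real (d v)) - 2 * (\<Sum>(u,v)\<in>P. 1 / (real (d u) * real (d v)))"
    by (simp add: case_prod_beta sum.distrib sum_subtractf sum_distrib_left)
  also have "\<dots> = real (card V) - 2 * (\<Sum>(u,v)\<in>P. 1 / (real (d u) * real (d v)))"
    using sum_fst sum_snd cardV by simp
  also have "\<dots> \<le> real (card V) - 2 * (\<Sum>p\<in>P. 1 / (real (card A) * real (card B)))"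
  proof -
    have "(\<Sum>p\<in>P. 1 / (real (card A) * real (card B))) \<le> (\<Sum>(u,v)\<in>P. 1 / (real (d u) * real (d v)))"
    proof (rule sum_mono)
      fix p assume "p \<in> P"
      obtain u v where p: "p = (u,v)" by force
      have "u \<in> A" "v \<in> B" using \<open>p \<in> P\<close> p unfolding P_def by auto
      then have "d u \<ge> 1" "d v \<ge> 1" "d u \<le> card B" "d v \<le> card A" using dpos degA degB by auto
      then have "real (d u) * real (d v) \<le> real (card A) * real (card B)"
        by (metis mult.commute mult_le_mono of_nat_le_iff of_nat_mult)
      moreover have "real (d u) * real (d v) > 0" using \<open>d u \<ge> 1\<close> \<open>d v \<ge> 1\<close> by simp
      ultimately show "1 / (real (card A) * real (card B)) \<le> (case p of (u,v) \<Rightarrow> 1 / (real (d u) * real (d v)))"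
        unfolding p by (simp add: frac_le)
    qed
    then show ?thesis by simp
  qed
  also have "\<dots> = real (card V) - 2 * real (card P) / (real (card A) * real (card B))"
    by simp
  finally have sq: "(\<Sum>p\<in>P. sqrt (g p))\<^sup>2 \<le> real (card P) * (real (card V) - 2 * real (card P) / (real (card A) * real (card B)))"
    by (simp add: mult.commute mult_right_mono)
  show ?thesis unfolding ABC_P hg by (rule real_le_rsqrt[OF sq])
qed

lemma complete_of_card: "card P = card A * card B \<Longrightarrow> \<forall>u\<in>A. \<forall>v\<in>B. E u v"
proof -
  assume "card P = card A * card B"
  then have "card P = card (A \<times> B)" by (simp add: card_cartesian_product)
  then have "P = A \<times> B" using card_subset_eq[OF _ PAB] finA finB by simp
  then show ?thesis unfolding P_def by auto
qed

lemma ABC_complete: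
  assumes cp: "\<forall>u\<in>A. \<forall>v\<in>B. E u v"
  shows "ABC V E = sqrt (real (card A) * real (card B) * (real (card V) - 2))"
proof -
  have dA: "d u = card B" if "u \<in> A" for u
  proof -
    have "{w\<in>V. E u w} = B" using nbA[OF that] cp that VAB by auto
    then show ?thesis by (simp add: degree_def)
  qed
  have dB: "d v = card A" if "v \<in> B" for v
  proof -
    have "{w\<in>V. E v w} = A" using nbB[OF that] cp that VAB Esym by auto
    then show ?thesis by (simp add: degree_def)
  qed
  have PP: "P = A \<times> B" using cp unfolding P_def by auto
  have "ABC V E = (\<Sum>(u,v)\<in>A \<times> B. h (card B) (card A))"
    unfolding ABC_P PP by (intro sum.cong) (auto simp: dA dB)
  also have "\<dots> = real (card A) * real (card B) * h (card B) (card A)"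
    by (simp add: card_cartesian_product)
  also have "\<dots> = sqrt (real (card A) * real (card B) * (real (card V) - 2))"
  proof -
    define p where "p = real (card A) * real (card B)"
    have p0: "p > 0" using cardAB unfolding p_def by simp
    have "h (card B) (card A) = sqrt ((real (card V) - 2) / p)"
      unfolding h_def p_def using cardV by (simp add: mult.commute add.commute)
    then have "p * h (card B) (card A) = sqrt (p\<^sup>2) * sqrt ((real (card V) - 2) / p)"
      using p0 by simp
    also have "\<dots> = sqrt (p * (real (card V) - 2))"
      by (subst real_sqrt_mult[symmetric]) (use p0 in \<open>simp add: power2_eq_square\<close>)
    finally show ?thesis unfolding p_def .
  qed
  finally show ?thesis .
qed

lemma complete_A1: "card A = 1 \<Longrightarrow> \<forall>u\<in>A. \<forall>v\<in>B. E u v"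
proof (intro ballI)
  fix u v assume a: "card A = 1" and u: "u \<in> A" and v: "v \<in> B"
  obtain x where Ax: "A = {x}" using a card_1_singletonE by blast
  have "{w\<in>V. E v w} \<noteq> {}"
  proof
    assume "{w\<in>V. E v w} = {}"
    then have "d v = 0" unfolding degree_def by (metis card.empty)
    then show False using dpos v by fastforce
  qed
  then obtain w where "w \<in> {w\<in>V. E v w}" by blast
  then have "w \<in> A" "E v w" using nbB[OF v] by auto
  then show "E u v" using Ax u Esym by auto
qed

lemma complete_B1: "card B = 1 \<Longrightarrow> \<forall>u\<in>A. \<forall>v\<in>B. E u v"
proof (intro ballI)
  fix u v assume a: "card B = 1" and u: "u \<in> A" and v: "v \<in> B"
  obtain x where Ax: "B = {x}" using a card_1_singletonE by blast
  have "{w\<in>V. E u w} \<noteq> {}"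
  proof
    assume "{w\<in>V. E u w} = {}"
    then have "d u = 0" unfolding degree_def by (metis card.empty)
    then show False using dpos u by fastforce
  qed
  then obtain w where "w \<in> {w\<in>V. E u w}" by blast
  then have "w \<in> B" "E u w" using nbA[OF u] by auto
  then show "E u v" using Ax v by auto
qed

lemma bound_ab:
  shows "ABC V E \<le> sqrt (real (card A) * real (card B) * (real (card V) - 2))"
    and "ABC V E = sqrt (real (card A) * real (card B) * (real (card V) - 2)) \<Longrightarrow> \<forall>u\<in>A. \<forall>v\<in>B. E u v"
proof -
  have mle: "card P \<le> card A * card B"
    using card_mono[OF _ PAB] finA finB by (simp add: card_cartesian_product)
  have p0: "real (card A) * real (card B) > 0" using cardAB by simp
  have mle': "real (card P) \<le> real (card A) * real (card B)"
    using mle by (metis of_nat_le_iff of_nat_mult)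
  show "ABC V E \<le> sqrt (real (card A) * real (card B) * (real (card V) - 2))"
  proof (cases "card V \<ge> 4")
    case True
    have "ABC V E \<le> sqrt (real (card P) * (real (card V) - 2 * real (card P) / (real (card A) * real (card B))))"
      by (rule main_bound)
    also have "\<dots> \<le> sqrt (real (card A) * real (card B) * (real (card V) - 2))"
      using key_real(1)[OF p0 _ mle', of "real (card V)"] True by simp
    finally show ?thesis .
  next
    case False
    then have "card A = 1 \<or> card B = 1" using cardV cardAB by linarith
    then have "\<forall>u\<in>A. \<forall>v\<in>B. E u v" using complete_A1 complete_B1 by blast
    then show ?thesis using ABC_complete by simp
  qed
  assume eq: "ABC V E = sqrt (real (card A) * real (card B) * (real (card V) - 2))"
  show "\<forall>u\<in>A. \<forall>v\<in>B. E u v"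
  proof (cases "card V \<ge> 4")
    case True
    show ?thesis
    proof (cases "card P = card A * card B")
      case True
      then show ?thesis by (rule complete_of_card)
    next
      case False
      then have "real (card P) < real (card A) * real (card B)"
        using mle by (metis le_neq_implies_less of_nat_less_iff of_nat_mult)
      then have "real (card P) * (real (card V) - 2 * real (card P) / (real (card A) * real (card B)))
          < real (card A) * real (card B) * (real (card V) - 2)"
        using key_real(2)[OF p0 _ mle', of "real (card V)"] \<open>card V \<ge> 4\<close> by simp
      then have "ABC V E < sqrt (real (card A) * real (card B) * (real (card V) - 2))"
        using main_bound by (meson order.strict_trans1 real_sqrt_less_iff)
      then show ?thesis using eq by simp
    qed
  next
    case False
    then have "card A = 1 \<or> card B = 1" using cardV cardAB by linarith
    then show ?thesis using complete_A1 complete_B1 by blast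
  qed
qed

lemma iso:
  assumes cp: "\<forall>u\<in>A. \<forall>v\<in>B. E u v"
    and ca: "card A = (card V + 1) div 2" and cb: "card B = card V div 2"
  shows "graph_iso V E (turan_V (card V)) (turan_E (card V) 2)"
proof -
  define n where "n = card V"
  define Ev where "Ev = {i\<in>{..<n}. i mod 2 = 0}"
  define Od where "Od = {i\<in>{..<n}. i mod 2 = 1}"
  have "card A = card Ev" "card B = card Od" using ca cb card_parity unfolding Ev_def Od_def n_def by auto
  moreover have "finite Ev" "finite Od" unfolding Ev_def Od_def by auto
  ultimately obtain g1 g2 where g1: "bij_betw g1 A Ev" and g2: "bij_betw g2 B Od"
    using finite_same_card_bij finA finB by metis
  define f where "f u = (if u \<in> A then g1 u else g2 u)" for u
  have "bij_betw f A Ev = bij_betw g1 A Ev" by (rule bij_betw_cong) (simp add: f_def)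
  then have f1: "bij_betw f A Ev" using g1 by simp
  have "bij_betw f B Od = bij_betw g2 B Od" by (rule bij_betw_cong) (use disj in \<open>auto simp add: f_def\<close>)
  then have f2: "bij_betw f B Od" using g2 by simp
  have "bij_betw f (A \<union> B) (Ev \<union> Od)" by (rule bij_betw_combine[OF f1 f2]) (auto simp: Ev_def Od_def)
  moreover have "Ev \<union> Od = {..<n}" unfolding Ev_def Od_def by auto
  ultimately have bij: "bij_betw f V {..<n}" using VAB by simp
  have fA: "u \<in> A \<Longrightarrow> f u < n \<and> f u mod 2 = 0" for u using f1 unfolding bij_betw_def Ev_def by auto
  have fB: "u \<in> B \<Longrightarrow> f u < n \<and> f u mod 2 = 1" for u using f2 unfolding bij_betw_def Od_def by auto
  have "E u v \<longleftrightarrow> turan_E n 2 (f u) (f v)" if u: "u \<in> V" and v: "v \<in> V" for u v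
  proof (cases "u \<in> A")
    case True
    show ?thesis
    proof (cases "v \<in> A")
      case True
      then have "\<not> E u v" using nbA[OF \<open>u \<in> A\<close>] v disj by auto
      then show ?thesis using fA True \<open>u \<in> A\<close> unfolding turan_E_def by auto
    next
      case False
      then have "v \<in> B" using v VAB by auto
      then show ?thesis using fA fB \<open>u \<in> A\<close> cp unfolding turan_E_def by auto
    qed
  next
    case False
    then have uB: "u \<in> B" using u VAB by auto
    show ?thesis
    proof (cases "v \<in> A")
      case True
      then show ?thesis using fA fB uB cp Esym unfolding turan_E_def by auto
    next
      case False
      then have "v \<in> B" using v VAB by auto
      then have "\<not> E u v" using nbB[OF uB] disj v by auto
      then show ?thesis using fB \<open>v \<in> B\<close> uB unfolding turan_E_def by auto
    qed
  qed
  then show ?thesis using bij unfolding graph_iso_def turan_V_def n_def by blast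
qed

end


lemma sq_ident: "4 * (int a * int b) + (int a - int b)^2 = (int a + int b)^2"
  by (simp add: power2_eq_square algebra_simps)

lemma sqrt_scale: "x \<ge> 0 \<Longrightarrow> sqrt (x * x * y) = x * sqrt y"
  by (simp add: real_sqrt_mult)

lemma num_even:
  fixes a b n :: nat
  assumes "even n" "a + b = n" "a \<ge> 1" "b \<ge> 1"
  shows "sqrt (real a * real b * (real n - 2)) \<le> real n / 2 * sqrt (real n - 2) \<and>
    (sqrt (real a * real b * (real n - 2)) = real n / 2 * sqrt (real n - 2) \<longleftrightarrow> a = (n+1) div 2 \<and> b = n div 2)"
proof -
  obtain k where k: "n = 2 * k" using assms(1) by auto
  have n2: "real n - 2 \<ge> 0" using assms by simp
  have b1: "real n / 2 * sqrt (real n - 2) = sqrt (real k * real k * (real n - 2))"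
    using k by (simp add: sqrt_scale)
  have s: "int a + int b = 2 * int k" using assms k by simp
  have i: "4 * (int a * int b) + (int a - int b)^2 = (2 * int k)^2" using sq_ident[of a b] unfolding s .
  have abk: "a * b \<le> k * k"
  proof -
    have z: "(int a - int b)^2 \<ge> 0" by simp
    have "(2 * int k)^2 = 4 * (int k * int k)" by (simp add: power2_eq_square)
    then have "int a * int b \<le> int k * int k" using i z by linarith
    then have "int (a * b) \<le> int (k * k)" by simp
    then show ?thesis by linarith
  qed
  have le: "real a * real b * (real n - 2) \<le> real k * real k * (real n - 2)"
  proof (rule mult_right_mono)
    have "real (a * b) \<le> real (k * k)" using abk by (simp only: of_nat_le_iff)
    then show "real a * real b \<le> real k * real k" by simp
  qed (rule n2)
  show ?thesis
  proof
    show "sqrt (real a * real b * (real n - 2)) \<le> real n / 2 * sqrt (real n - 2)"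
      unfolding b1 using le by simp
    have kd: "(n+1) div 2 = k" "n div 2 = k" using k by auto
    show "sqrt (real a * real b * (real n - 2)) = real n / 2 * sqrt (real n - 2) \<longleftrightarrow> a = (n+1) div 2 \<and> b = n div 2"
      unfolding b1 kd
    proof
      assume eq: "sqrt (real a * real b * (real n - 2)) = sqrt (real k * real k * (real n - 2))"
      show "a = k \<and> b = k"
      proof (cases "n = 2")
        case True
        then show ?thesis using assms k by auto
      next
        case False
        then have "real n - 2 > 0" using assms by simp
        then have "real a * real b = real k * real k" using eq by simp
        then have "real (a * b) = real (k * k)" by simp
        then have "a * b = k * k" by (simp only: of_nat_eq_iff)
        then have "int a * int b = int k * int k" by (metis of_nat_mult)
        moreover have "(2 * int k)^2 = 4 * (int k * int k)" by (simp add: power2_eq_square)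
        ultimately have "(int a - int b)^2 = 0" using i by linarith
        then have "a = b" by simp
        then show ?thesis using assms k by linarith
      qed
    qed simp
  qed
qed

lemma num_odd:
  fixes a b n :: nat
  assumes "odd n" "a + b = n" "a \<ge> 1" "b \<ge> 1"
  shows "sqrt (real a * real b * (real n - 2)) \<le> 1 / 2 * sqrt ((real n - 2) * (real n ^ 2 - 1)) \<and>
    (sqrt (real a * real b * (real n - 2)) = 1 / 2 * sqrt ((real n - 2) * (real n ^ 2 - 1)) \<longleftrightarrow>
      (a = (n+1) div 2 \<and> b = n div 2) \<or> (a = n div 2 \<and> b = (n+1) div 2))"
proof -
  obtain k where k: "n = 2 * k + 1" using assms(1) oddE by blast
  have n2: "real n - 2 \<ge> 0" using assms by simp
  have b1: "1 / 2 * sqrt ((real n - 2) * (real n ^ 2 - 1)) = sqrt (real k * (real k + 1) * (real n - 2))"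
  proof -
    have X: "(real n - 2) * (real n ^ 2 - 1) = 2 * 2 * (real k * (real k + 1) * (real n - 2))"
      using k by (simp add: power2_eq_square algebra_simps)
    have Y: "sqrt (2 * 2 * (real k * (real k + 1) * (real n - 2))) = 2 * sqrt (real k * (real k + 1) * (real n - 2))"
      by (rule sqrt_scale) simp
    show ?thesis unfolding X Y by simp
  qed
  have s: "int a + int b = 2 * int k + 1" using assms k by simp
  have i: "4 * (int a * int b) + (int a - int b)^2 = (2 * int k + 1)^2" using sq_ident[of a b] unfolding s .
  have "a \<noteq> b" using assms(2) k by presburger
  then have ne: "int a \<noteq> int b" by simp
  have sq1: "(int a - int b)^2 \<ge> 1"
  proof -
    have "int a - int b \<noteq> 0" using ne by simp
    then have "\<bar>int a - int b\<bar> \<ge> 1" by linarith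
    then have "\<bar>int a - int b\<bar> * \<bar>int a - int b\<bar> \<ge> 1 * 1" by (intro mult_mono) auto
    then show ?thesis by (simp add: power2_eq_square)
  qed
  have sq2: "(2 * int k + 1)^2 = 4 * (int k * (int k + 1)) + 1" by (simp add: power2_eq_square algebra_simps)
  have abk: "int a * int b \<le> int k * (int k + 1)"
    using i sq1 sq2 by linarith
  have abk': "real a * real b \<le> real k * (real k + 1)"
  proof -
    have "real_of_int (int a * int b) \<le> real_of_int (int k * (int k + 1))" using abk by linarith
    then show ?thesis by simp
  qed
  have le: "real a * real b * (real n - 2) \<le> real k * (real k + 1) * (real n - 2)"
    using abk' n2 by (intro mult_right_mono) auto
  show ?thesis
  proof
    show "sqrt (real a * real b * (real n - 2)) \<le> 1 / 2 * sqrt ((real n - 2) * (real n ^ 2 - 1))"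
      unfolding b1 using le by simp
    have kd: "(n+1) div 2 = k + 1" "n div 2 = k" using k by auto
    show "sqrt (real a * real b * (real n - 2)) = 1 / 2 * sqrt ((real n - 2) * (real n ^ 2 - 1)) \<longleftrightarrow>
      (a = (n+1) div 2 \<and> b = n div 2) \<or> (a = n div 2 \<and> b = (n+1) div 2)"
      unfolding b1 kd
    proof
      assume eq: "sqrt (real a * real b * (real n - 2)) = sqrt (real k * (real k + 1) * (real n - 2))"
      have "n \<ge> 3" using assms(2-4) k by presburger
      then have "real n - 2 > 0" by simp
      then have "real a * real b = real k * (real k + 1)" using eq by simp
      then have "real_of_int (int a * int b) = real_of_int (int k * (int k + 1))" by simp
      then have "int a * int b = int k * (int k + 1)" by (simp only: of_int_eq_iff)
      then have "(int a - int b)^2 = 1" using i sq2 by linarith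
      then have "int a - int b = 1 \<or> int a - int b = -1" by (simp add: power2_eq_1_iff)
      then show "a = k + 1 \<and> b = k \<or> a = k \<and> b = k + 1" using assms k by linarith
    next
      assume "a = k + 1 \<and> b = k \<or> a = k \<and> b = k + 1"
      then show "sqrt (real a * real b * (real n - 2)) = sqrt (real k * (real k + 1) * (real n - 2))"
        by (auto simp: algebra_simps)
    qed
  qed
qed



lemma conv:
  assumes sg: "simple_graph V E" and d1: "\<forall>v\<in>V. degree V E v \<ge> 1" and ne: "V \<noteq> {}"
    and iso: "graph_iso V E (turan_V (card V)) (turan_E (card V) 2)"
  shows "ABC V E = sqrt (real ((card V + 1) div 2) * real (card V div 2) * (real (card V) - 2))"
proof -
  define n where "n = card V"
  obtain f where f: "bij_betw f V {..<n}" and fe: "\<forall>u\<in>V. \<forall>v\<in>V. E u v \<longleftrightarrow> turan_E n 2 (f u) (f v)"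
    using iso unfolding graph_iso_def turan_V_def n_def by blast
  have fl: "u \<in> V \<Longrightarrow> f u < n" for u using f unfolding bij_betw_def by auto
  interpret G: bip V E "\<lambda>u. f u mod 2"
  proof
    show "simple_graph V E" by (rule sg)
    show "\<forall>v\<in>V. f v mod 2 < 2" by simp
    show "\<forall>u\<in>V. \<forall>v\<in>V. E u v \<longrightarrow> f u mod 2 \<noteq> f v mod 2" using fe unfolding turan_E_def by blast
    show "\<forall>v\<in>V. 1 \<le> degree V E v" by (rule d1)
    show "V \<noteq> {}" by (rule ne)
  qed
  have img: "f ` {v\<in>V. f v mod 2 = r} = {i\<in>{..<n}. i mod 2 = r}" for r
  proof -
    have fV: "f ` V = {..<n}" using f unfolding bij_betw_def by simp
    show ?thesis
    proof
      show "f ` {v\<in>V. f v mod 2 = r} \<subseteq> {i\<in>{..<n}. i mod 2 = r}" using fl by auto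
      show "{i\<in>{..<n}. i mod 2 = r} \<subseteq> f ` {v\<in>V. f v mod 2 = r}"
      proof
        fix i assume i: "i \<in> {i\<in>{..<n}. i mod 2 = r}"
        then have "i \<in> f ` V" using fV by auto
        then obtain v where "v \<in> V" "i = f v" by auto
        then show "i \<in> f ` {v\<in>V. f v mod 2 = r}" using i by auto
      qed
    qed
  qed
  have inj: "inj_on f V" using f unfolding bij_betw_def by simp
  have cA: "card G.A = (n + 1) div 2"
  proof -
    have "card G.A = card (f ` G.A)" unfolding G.A_def
      by (rule card_image[symmetric]) (rule inj_on_subset[OF inj], auto)
    also have "\<dots> = (n + 1) div 2" unfolding G.A_def img using card_parity by simp
    finally show ?thesis .
  qed
  have cB: "card G.B = n div 2"
  proof -
    have "card G.B = card (f ` G.B)" unfolding G.B_def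
      by (rule card_image[symmetric]) (rule inj_on_subset[OF inj], auto)
    also have "\<dots> = n div 2" unfolding G.B_def img using card_parity by simp
    finally show ?thesis .
  qed
  have cp: "\<forall>u\<in>G.A. \<forall>v\<in>G.B. E u v"
  proof (intro ballI)
    fix u v assume "u \<in> G.A" "v \<in> G.B"
    then have "u \<in> V" "v \<in> V" "f u mod 2 = 0" "f v mod 2 = 1" unfolding G.A_def G.B_def by auto
    moreover have "turan_E n 2 (f u) (f v)" using calculation fl unfolding turan_E_def by auto
    ultimately show "E u v" using fe by blast
  qed
  show ?thesis using G.ABC_complete[OF cp] cA cB unfolding n_def by simp
qed



theorem proposition5p2:
  fixes V :: "'a set" and E :: "'a \<Rightarrow> 'a \<Rightarrow> bool" and n :: nat
  assumes "simple_graph V E"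
    and "graph_connected V E"
    and "chromatic_number V E = 2"
    and "n = card V"
  shows "(even n \<longrightarrow>
            ABC V E \<le> real n / 2 * sqrt (real n - 2) \<and>
            (ABC V E = real n / 2 * sqrt (real n - 2) \<longleftrightarrow>
               graph_iso V E (turan_V n) (turan_E n 2)))
       \<and> (odd n \<longrightarrow>
            ABC V E \<le> 1 / 2 * sqrt ((real n - 2) * (real n ^ 2 - 1)) \<and>
            (ABC V E = 1 / 2 * sqrt ((real n - 2) * (real n ^ 2 - 1)) \<longleftrightarrow>
               graph_iso V E (turan_V n) (turan_E n 2)))"
proof -
  have fin: "finite V" and Ein: "\<And>u v. E u v \<Longrightarrow> u \<in> V \<and> v \<in> V"
    and irr: "\<And>v. \<not> E v v" using assms(1) unfolding simple_graph_def by auto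
  obtain hh where hh: "bij_betw hh V {0..<card V}" using ex_bij_betw_finite_nat[OF fin] by blast
  have ex: "colorable V E (card V)"
    unfolding colorable_def
  proof (intro exI conjI ballI impI)
    fix v assume "v \<in> V" then show "hh v < card V" using hh unfolding bij_betw_def by auto
  next
    fix u v assume uv: "u \<in> V" "v \<in> V" "E u v"
    then have "u \<noteq> v" using irr by auto
    then show "hh u \<noteq> hh v" using hh uv unfolding bij_betw_def inj_on_def by auto
  qed
  have col2: "colorable V E 2"
    using LeastI[of "colorable V E", OF ex] assms(3) unfolding chromatic_number_def by simp
  then obtain c :: "'a \<Rightarrow> nat" where c1: "\<forall>v\<in>V. c v < 2" and c2: "\<forall>u\<in>V. \<forall>v\<in>V. E u v \<longrightarrow> c u \<noteq> c v"
    unfolding colorable_def by blast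
  have not1: "\<not> colorable V E 1"
  proof
    assume "colorable V E 1"
    then have "chromatic_number V E \<le> 1" unfolding chromatic_number_def by (rule Least_le)
    then show False using assms(3) by simp
  qed
  have "\<exists>x y. E x y"
  proof (rule ccontr)
    assume "\<not> (\<exists>x y. E x y)"
    then have "\<forall>x y. \<not> E x y" by blast
    then have "colorable V E 1" unfolding colorable_def by (intro exI[of _ "\<lambda>_. 0"]) auto
    then show False using not1 by simp
  qed
  then obtain x y where xy: "E x y" by blast
  have xyV: "x \<in> V" "y \<in> V" "x \<noteq> y" using Ein[OF xy] irr xy by auto
  have deg1: "\<forall>v\<in>V. degree V E v \<ge> 1"
  proof
    fix u assume u: "u \<in> V"
    obtain w where w: "w \<in> V" "w \<noteq> u" using xyV by metis
    have "E\<^sup>*\<^sup>* u w" using assms(2) u w unfolding graph_connected_def by blast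
    then obtain z where z: "E u z"
      by (cases rule: converse_rtranclpE) (use w in auto)
    then have "z \<in> {z\<in>V. E u z}" using Ein by auto
    moreover have "finite {z\<in>V. E u z}" using fin by simp
    ultimately have "card {z\<in>V. E u z} > 0" using card_gt_0_iff by blast
    then show "degree V E u \<ge> 1" unfolding degree_def by simp
  qed
  have ne: "V \<noteq> {}" using xyV by auto
  interpret G: bip V E c using assms(1) c1 c2 deg1 ne by unfold_locales auto
  define a where "a = card G.A"
  define b where "b = card G.B"
  have ab: "a + b = n" "a \<ge> 1" "b \<ge> 1" using G.cardV G.cardAB assms(4) unfolding a_def b_def by auto
  have bd: "ABC V E \<le> sqrt (real a * real b * (real n - 2))"
    using G.bound_ab(1) assms(4) unfolding a_def b_def by simp
  have bdeq: "ABC V E = sqrt (real a * real b * (real n - 2)) \<Longrightarrow> \<forall>u\<in>G.A. \<forall>v\<in>G.B. E u v"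
    using G.bound_ab(2) assms(4) unfolding a_def b_def by simp
  have cv: "graph_iso V E (turan_V n) (turan_E n 2) \<Longrightarrow>
      ABC V E = sqrt (real ((n + 1) div 2) * real (n div 2) * (real n - 2))"
    using conv[OF assms(1) deg1 ne] assms(4) by simp
  have n2: "n \<ge> 2" using ab by simp
  have isoAB: "graph_iso V E (turan_V n) (turan_E n 2)"
    if cp: "\<forall>u\<in>G.A. \<forall>v\<in>G.B. E u v" and h: "(a = (n+1) div 2 \<and> b = n div 2) \<or> (a = n div 2 \<and> b = (n+1) div 2)"
  proof (cases "a = (n+1) div 2 \<and> b = n div 2")
    case True
    then show ?thesis using G.iso[OF cp] assms(4) unfolding a_def b_def by simp
  next
    case False
    then have h2: "a = n div 2" "b = (n+1) div 2" using h by auto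
    have c3: "\<forall>u\<in>V. \<forall>v\<in>V. E u v \<longrightarrow> 1 - c u \<noteq> 1 - c v"
    proof (intro ballI impI)
      fix u v assume "u \<in> V" "v \<in> V" "E u v"
      then have "c u \<noteq> c v" "c u < 2" "c v < 2" using c1 c2 by auto
      then show "1 - c u \<noteq> 1 - c v" by linarith
    qed
    interpret H: bip V E "\<lambda>v. 1 - c v" using assms(1) c1 c3 deg1 ne by unfold_locales auto
    have HA: "H.A = G.B" unfolding H.A_def G.B_def using c1 by force
    have HB: "H.B = G.A" unfolding H.B_def G.A_def using c1 by force
    have cp2: "\<forall>u\<in>H.A. \<forall>v\<in>H.B. E u v" using cp G.Esym unfolding HA HB by blast
    show ?thesis using H.iso[OF cp2] h2 assms(4) unfolding a_def b_def HA HB by simp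
  qed
  show ?thesis
  proof (intro conjI impI)
    assume ev: "even n"
    note ne = num_even[OF ev ab]
    show "ABC V E \<le> real n / 2 * sqrt (real n - 2)" using ne bd by linarith
    show "ABC V E = real n / 2 * sqrt (real n - 2) \<longleftrightarrow> graph_iso V E (turan_V n) (turan_E n 2)"
    proof
      assume eq: "ABC V E = real n / 2 * sqrt (real n - 2)"
      then have e2: "sqrt (real a * real b * (real n - 2)) = real n / 2 * sqrt (real n - 2)" using ne bd by linarith
      then have "ABC V E = sqrt (real a * real b * (real n - 2))" using eq by simp
      then have cp: "\<forall>u\<in>G.A. \<forall>v\<in>G.B. E u v" by (rule bdeq)
      show "graph_iso V E (turan_V n) (turan_E n 2)" using isoAB[OF cp] ne e2 by blast
    next
      assume "graph_iso V E (turan_V n) (turan_E n 2)"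
      then have "ABC V E = sqrt (real ((n + 1) div 2) * real (n div 2) * (real n - 2))" by (rule cv)
      moreover have "(n+1) div 2 + n div 2 = n" "(n+1) div 2 \<ge> 1" "n div 2 \<ge> 1" using n2 by auto
      ultimately show "ABC V E = real n / 2 * sqrt (real n - 2)" using num_even[OF ev] by simp
    qed
  next
    assume od: "odd n"
    note ne = num_odd[OF od ab]
    show "ABC V E \<le> 1 / 2 * sqrt ((real n - 2) * (real n ^ 2 - 1))" using ne bd by linarith
    show "ABC V E = 1 / 2 * sqrt ((real n - 2) * (real n ^ 2 - 1)) \<longleftrightarrow> graph_iso V E (turan_V n) (turan_E n 2)"
    proof
      assume eq: "ABC V E = 1 / 2 * sqrt ((real n - 2) * (real n ^ 2 - 1))"
      then have e2: "sqrt (real a * real b * (real n - 2)) = 1 / 2 * sqrt ((real n - 2) * (real n ^ 2 - 1))" using ne bd by linarith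
      then have "ABC V E = sqrt (real a * real b * (real n - 2))" using eq by simp
      then have cp: "\<forall>u\<in>G.A. \<forall>v\<in>G.B. E u v" by (rule bdeq)
      show "graph_iso V E (turan_V n) (turan_E n 2)" using isoAB[OF cp] ne e2 by blast
    next
      assume "graph_iso V E (turan_V n) (turan_E n 2)"
      then have "ABC V E = sqrt (real ((n + 1) div 2) * real (n div 2) * (real n - 2))" by (rule cv)
      moreover have "(n+1) div 2 + n div 2 = n" "(n+1) div 2 \<ge> 1" "n div 2 \<ge> 1" using n2 by auto
      ultimately show "ABC V E = 1 / 2 * sqrt ((real n - 2) * (real n ^ 2 - 1))" using num_odd[OF od] by simp
    qed
  qed
qed


end
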